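(* Let $a,b\in[0,1]$ with $a+b>1$, $\bar a=1-a$, $\bar b=1-b$, $\gamma=2^{\frac{H(b)-H(a)}{a+b-1}}$, $K=\frac{1}{(a+b-1)(\gamma+1)}$. Define functions $P_0,P_1$ on $\{0,1\}^n$, $n\ge0$, by $P_0(\emptyset)=P_1(\emptyset)=1$ and for $u\in\{0,1\}^{n-1}$: $P_0(0,u)=K(b\gamma P_0(u)-\bar bP_1(u))$, $P_0(1,u)=K(-\bar a\gamma P_0(u)+aP_1(u))$, $P_1(0,u)=K(aP_0(u)-\bar a\gamma P_1(u))$, $P_1(1,u)=K(-\bar bP_0(u)+b\gamma P_1(u))$. Define the sets $\mathcal L_0,\dots,\mathcal L_6$ of real numbers $\beta$: $\mathcal L_1=\{\max(\frac{\bar a}{\bar b}\gamma,\frac{\gamma(\bar a+b)-\sqrt{\gamma^2(\bar a+b)^2-4a\bar b}}{2\bar b})\le\beta\le\frac{\gamma(\bar a+b)+\sqrt{\gamma^2(\bar a+b)^2-4a\bar b}}{2\bar b}\}$, $\mathcal L_2=\{\frac{(a+\bar b)+\sqrt{(a+\bar b)^2-4\bar ab\gamma^2}}{2b\gamma}\le\beta\le\frac{\bar a}{\bar b}\gamma\}$, $\mathcal L_3=\{\beta\le\min(\frac{\bar a}{\bar b}\gamma,\frac{(a+\bar b)-\sqrt{(a+\bar b)^2-4\bar ab\gamma^2}}{2b\gamma})\}$, $\mathcal L_4=\{\beta\le\min(\frac{b\gamma}{a},\frac{\gamma(\bar a+b)-\sqrt{\gamma^2(\bar a+b)^2-4a\bar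 b}}{2a})\}$, $\mathcal L_5=\{\frac{\gamma(\bar a+b)+\sqrt{\gamma^2(\bar a+b)^2-4a\bar b}}{2a}\le\beta\le\frac{b\gamma}{a}\}$, $\mathcal L_6=\{\max(\frac{b\gamma}{a},\frac{(a+\bar b)-\sqrt{(a+\bar b)^2-4\bar ab\gamma^2}}{2\bar a\gamma})\le\beta\le\frac{(a+\bar b)+\sqrt{(a+\bar b)^2-4\bar ab\gamma^2}}{2\bar a\gamma}\}$, $\mathcal L_0=\{1\le\beta\le\min(\frac{a}{\bar a\gamma},\frac{b\gamma}{\bar b})\}$. If $(\mathcal L_1\cup\mathcal L_2\cup\mathcal L_3)\cap(\mathcal L_4\cup\mathcal L_5\cup\mathcal L_6)\cap\mathcal L_0\ne\emptyset$, then there exists $\beta$ with $1\le\beta\le\min\{\frac{a}{\bar a\gamma},\frac{b\gamma}{\bar b}\}$ such that for every $n\ge1$: if $\beta P_1(u)\ge P_0(u)$ and $\beta P_0(u)\ge P_1(u)$ for all $u\in\{0,1\}^{n-1}$, then $\beta P_1(x)\ge P_0(x)$ and $\beta P_0(x)\ge P_1(x)$ for all $x\in\{0,1\}^n$.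
   Context: $H(p)=-p\log_2p-(1-p)\log_2(1-p)$ is the binary entropy; $(0,u)$ denotes $0$ followed by the sequence $u$. *)

theory Defs
  imports "HOL-Analysis.Analysis"
begin

text \<open>Binary entropy with base-2 logarithm (log 2 0 = 0 in Isabelle, so 0 log 0 = 0).\<close>
definition H :: "real \<Rightarrow> real" where
  "H p = - p * log 2 p - (1 - p) * log 2 (1 - p)"

definition gam :: "real \<Rightarrow> real \<Rightarrow> real" where
  "gam a b = 2 powr ((H b - H a) / (a + b - 1))"

definition KK :: "real \<Rightarrow> real \<Rightarrow> real" where
  "KK a b = 1 / ((a + b - 1) * (gam a b + 1))"

text \<open>Binary strings are bool lists: False = 0, True = 1; the head is the first symbol.
  PP a b u = (P_0(u), P_1(u)).\<close>
fun PP :: "real \<Rightarrow> real \<Rightarrow> bool list \<Rightarrow> real \<times> real" where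
  "PP a b [] = (1, 1)"
| "PP a b (False # u) = (let (p0, p1) = PP a b u; g = gam a b; K = KK a b in
     (K * (b * g * p0 - (1 - b) * p1), K * (a * p0 - (1 - a) * g * p1)))"
| "PP a b (True # u) = (let (p0, p1) = PP a b u; g = gam a b; K = KK a b in
     (K * (- (1 - a) * g * p0 + a * p1), K * (- (1 - b) * p0 + b * g * p1)))"

definition P0 :: "real \<Rightarrow> real \<Rightarrow> bool list \<Rightarrow> real" where
  "P0 a b u = fst (PP a b u)"
definition P1 :: "real \<Rightarrow> real \<Rightarrow> bool list \<Rightarrow> real" where
  "P1 a b u = snd (PP a b u)"

text \<open>Discriminants; the sets involving a square root are taken to contain only
  \<beta> for which the square root is of a nonnegative number (the bounds exist as reals).\<close>
definition D1 :: "real \<Rightarrow> real \<Rightarrow> real" where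
  "D1 a b = (gam a b)^2 * ((1 - a) + b)^2 - 4 * a * (1 - b)"
definition D2 :: "real \<Rightarrow> real \<Rightarrow> real" where
  "D2 a b = (a + (1 - b))^2 - 4 * (1 - a) * b * (gam a b)^2"

definition L1 :: "real \<Rightarrow> real \<Rightarrow> real set" where
  "L1 a b = {\<beta>. D1 a b \<ge> 0 \<and>
     max ((1 - a) / (1 - b) * gam a b)
         ((gam a b * ((1 - a) + b) - sqrt (D1 a b)) / (2 * (1 - b))) \<le> \<beta> \<and>
     \<beta> \<le> (gam a b * ((1 - a) + b) + sqrt (D1 a b)) / (2 * (1 - b))}"

definition L2 :: "real \<Rightarrow> real \<Rightarrow> real set" where
  "L2 a b = {\<beta>. D2 a b \<ge> 0 \<and>
     ((a + (1 - b)) + sqrt (D2 a b)) / (2 * b * gam a b) \<le> \<beta> \<and>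
     \<beta> \<le> (1 - a) / (1 - b) * gam a b}"

definition L3 :: "real \<Rightarrow> real \<Rightarrow> real set" where
  "L3 a b = {\<beta>. D2 a b \<ge> 0 \<and>
     \<beta> \<le> min ((1 - a) / (1 - b) * gam a b)
               (((a + (1 - b)) - sqrt (D2 a b)) / (2 * b * gam a b))}"

definition L4 :: "real \<Rightarrow> real \<Rightarrow> real set" where
  "L4 a b = {\<beta>. D1 a b \<ge> 0 \<and>
     \<beta> \<le> min (b * gam a b / a)
               ((gam a b * ((1 - a) + b) - sqrt (D1 a b)) / (2 * a))}"

definition L5 :: "real \<Rightarrow> real \<Rightarrow> real set" where
  "L5 a b = {\<beta>. D1 a b \<ge> 0 \<and>
     (gam a b * ((1 - a) + b) + sqrt (D1 a b)) / (2 * a) \<le> \<beta> \<and>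
     \<beta> \<le> b * gam a b / a}"

definition L6 :: "real \<Rightarrow> real \<Rightarrow> real set" where
  "L6 a b = {\<beta>. D2 a b \<ge> 0 \<and>
     max (b * gam a b / a)
         (((a + (1 - b)) - sqrt (D2 a b)) / (2 * (1 - a) * gam a b)) \<le> \<beta> \<and>
     \<beta> \<le> ((a + (1 - b)) + sqrt (D2 a b)) / (2 * (1 - a) * gam a b)}"

definition L0 :: "real \<Rightarrow> real \<Rightarrow> real set" where
  "L0 a b = {\<beta>. 1 \<le> \<beta> \<and> \<beta> \<le> min (a / ((1 - a) * gam a b)) (b * gam a b / (1 - b))}"

end

theory Submission
  imports Defs
begin

lemma between_roots:
  fixes c m e D \<beta> :: real
  assumes "c > 0" "D \<ge> 0" "D = m^2 - 4*c*e"
    "(m - sqrt D)/(2*c) \<le> \<beta>" "\<beta> \<le> (m + sqrt D)/(2*c)"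
  shows "c*\<beta>^2 - m*\<beta> + e \<le> 0"
proof -
  have s: "sqrt D ^2 = D" using assms(2) by simp
  have "m - sqrt D \<le> 2*c*\<beta>" using assms(1,4) by (simp add: pos_divide_le_eq mult.commute)
  moreover have "2*c*\<beta> \<le> m + sqrt D" using assms(1,5) by (simp add: pos_le_divide_eq mult.commute)
  ultimately have "\<bar>2*c*\<beta> - m\<bar> \<le> \<bar>sqrt D\<bar>" by simp
  hence "(2*c*\<beta> - m)^2 \<le> sqrt D ^2" by (simp only: abs_le_square_iff)
  hence "(2*c*\<beta> - m)^2 \<le> m^2 - 4*c*e" using s assms(3) by simp
  hence "4*c*(c*\<beta>^2 - m*\<beta> + e) \<le> 0" by (simp add: power2_eq_square algebra_simps)
  thus ?thesis using assms(1) by (simp add: mult_le_0_iff)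
qed

lemma outside_roots:
  fixes c m e D \<beta> :: real
  assumes "c > 0" "D \<ge> 0" "D = m^2 - 4*c*e"
    "\<beta> \<le> (m - sqrt D)/(2*c) \<or> (m + sqrt D)/(2*c) \<le> \<beta>"
  shows "c*\<beta>^2 - m*\<beta> + e \<ge> 0"
proof -
  have s: "sqrt D ^2 = D" using assms(2) by simp
  have "2*c*\<beta> \<le> m - sqrt D \<or> m + sqrt D \<le> 2*c*\<beta>"
    using assms(1,4) by (auto simp add: pos_divide_le_eq pos_le_divide_eq mult.commute)
  hence "\<bar>sqrt D\<bar> \<le> \<bar>2*c*\<beta> - m\<bar>" using real_sqrt_ge_zero[OF assms(2)] by (auto simp: abs_if)
  hence "sqrt D ^2 \<le> (2*c*\<beta> - m)^2" by (simp only: abs_le_square_iff)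
  hence "m^2 - 4*c*e \<le> (2*c*\<beta> - m)^2" using s assms(3) by simp
  hence "4*c*(c*\<beta>^2 - m*\<beta> + e) \<ge> 0" by (simp add: power2_eq_square algebra_simps)
  thus ?thesis using assms(1) by (simp add: zero_le_mult_iff)
qed

lemma key:
  fixes A B \<beta> p0 p1 :: real
  assumes "1 \<le> \<beta>" "A*\<beta>+B \<ge> 0" "A+B*\<beta> \<ge> 0" "\<beta> = 1 \<Longrightarrow> A+B \<le> 0"
    "p0 \<le> \<beta>*p1" "p1 \<le> \<beta>*p0"
  shows "A*p0+B*p1 \<ge> 0"
proof (cases "\<beta> = 1")
  case True
  hence "p0 = p1" "A + B = 0" using assms by auto
  then show ?thesis by (simp add: distrib_right[symmetric])
next
  case False
  hence b: "\<beta> > 1" using assms(1) by simp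
  have id: "(\<beta>^2-1)*(A*p0+B*p1) = (\<beta>*p0-p1)*(A*\<beta>+B) + (\<beta>*p1-p0)*(A+B*\<beta>)"
    by (simp add: power2_eq_square algebra_simps)
  have "(\<beta>*p0-p1)*(A*\<beta>+B) \<ge> 0" "(\<beta>*p1-p0)*(A+B*\<beta>) \<ge> 0" using assms by simp_all
  hence "(\<beta>^2-1)*(A*p0+B*p1) \<ge> 0" using id by linarith
  moreover have "\<beta>^2 > 1" using b by (simp add: one_less_power)
  ultimately show ?thesis by (simp add: zero_le_mult_iff)
qed


lemma form_props:
  fixes a b g \<beta> :: real
  assumes "0 \<le> a" "a \<le> 1" "0 \<le> b" "b \<le> 1" "a + b > 1" "g > 0" "1 \<le> \<beta>"
  and D1: "D1 a b = g^2 * ((1 - a) + b)^2 - 4 * a * (1 - b)"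
  and D2: "D2 a b = (a + (1 - b))^2 - 4 * (1 - a) * b * g^2"
  and g: "gam a b = g"
  and m1: "\<beta> \<in> L1 a b \<union> L2 a b \<union> L3 a b"
  and m2: "\<beta> \<in> L4 a b \<union> L5 a b \<union> L6 a b"
  shows "(\<beta>*a - b*g)*\<beta> + ((1-b) - \<beta>*(1-a)*g) \<ge> 0"
    "(\<beta>*a - b*g) + ((1-b) - \<beta>*(1-a)*g)*\<beta> \<ge> 0"
    "(\<beta>*b*g - a)*\<beta> + ((1-a)*g - \<beta>*(1-b)) \<ge> 0"
    "(\<beta>*b*g - a) + ((1-a)*g - \<beta>*(1-b))*\<beta> \<ge> 0"
proof -
  have a0: "a > 0" "b > 0" using assms by auto
  have bb: "\<beta>^2 - 1 \<ge> 0" using assms(7) by (simp add: one_le_power)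
  define A2 where "A2 = \<beta>*b*g - a"
  define B2 where "B2 = (1-a)*g - \<beta>*(1-b)"
  have "A2*\<beta> + B2 \<ge> 0 \<and> A2 + B2*\<beta> \<ge> 0"
  proof -
    consider "\<beta> \<in> L1 a b" | "\<beta> \<in> L2 a b" | "\<beta> \<in> L3 a b" using m1 by blast
    then show ?thesis
    proof cases
      case 1
      have bpos: "1 - b > 0"
      proof (rule ccontr)
        assume "\<not> 1 - b > 0" hence "1 - b = 0" using assms by auto
        thus False using 1 assms(7) by (auto simp: L1_def)
      qed
      have q: "(1-b)*\<beta>^2 - (g*((1-a)+b))*\<beta> + a \<le> 0"
        apply (rule between_roots[where D="D1 a b"])
        using 1 bpos by (auto simp: L1_def g D1 power_mult_distrib mult_ac)
      have "(1-a)/(1-b)*g \<le> \<beta>" using 1 by (auto simp: L1_def g)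
      hence "B2 \<le> 0" using bpos by (simp add: B2_def pos_divide_le_eq algebra_simps)
      have c4: "A2 + B2*\<beta> \<ge> 0" using q by (simp add: A2_def B2_def power2_eq_square algebra_simps)
      have "A2*\<beta> + B2 = \<beta>*(A2+B2*\<beta>) + (-B2)*(\<beta>^2-1)" by (simp add: power2_eq_square algebra_simps)
      moreover have "\<beta>*(A2+B2*\<beta>) \<ge> 0" using c4 assms(7) by simp
      moreover have "(-B2)*(\<beta>^2-1) \<ge> 0" using \<open>B2 \<le> 0\<close> bb by (intro mult_nonneg_nonneg) auto
      ultimately show ?thesis using c4 by linarith
    next
      case 2
      have q: "(b*g)*\<beta>^2 - (a+(1-b))*\<beta> + (1-a)*g \<ge> 0"
        apply (rule outside_roots[where D="D2 a b"])
        using 2 a0 assms(6) by (auto simp: L2_def g D2 power_mult_distrib mult_ac power2_eq_square)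
      have "B2 \<ge> 0"
      proof (cases "1 - b > 0")
        case True
        have "\<beta> \<le> (1-a)/(1-b)*g" using 2 by (auto simp: L2_def g)
        then show ?thesis using True by (simp add: B2_def pos_le_divide_eq algebra_simps)
      next
        case False hence "1 - b = 0" using assms by auto
        then show ?thesis using assms by (simp add: B2_def)
      qed
      have c3: "A2*\<beta> + B2 \<ge> 0" using q by (simp add: A2_def B2_def power2_eq_square algebra_simps)
      have "\<beta>*(A2 + B2*\<beta>) = (A2*\<beta>+B2) + B2*(\<beta>^2-1)" by (simp add: power2_eq_square algebra_simps)
      moreover have "B2*(\<beta>^2-1) \<ge> 0" using \<open>B2 \<ge> 0\<close> bb by (intro mult_nonneg_nonneg) auto
      ultimately have "\<beta>*(A2 + B2*\<beta>) \<ge> 0" using c3 by linarith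
      hence "A2 + B2*\<beta> \<ge> 0" using assms(7) by (simp add: zero_le_mult_iff)
      then show ?thesis using c3 by simp
    next
      case 3
      have q: "(b*g)*\<beta>^2 - (a+(1-b))*\<beta> + (1-a)*g \<ge> 0"
        apply (rule outside_roots[where D="D2 a b"])
        using 3 a0 assms(6) by (auto simp: L3_def g D2 power_mult_distrib mult_ac power2_eq_square)
      have "B2 \<ge> 0"
      proof (cases "1 - b > 0")
        case True
        have "\<beta> \<le> (1-a)/(1-b)*g" using 3 by (auto simp: L3_def g)
        then show ?thesis using True by (simp add: B2_def pos_le_divide_eq algebra_simps)
      next
        case False hence "1 - b = 0" using assms by auto
        then show ?thesis using assms by (simp add: B2_def)
      qed
      have c3: "A2*\<beta> + B2 \<ge> 0" using q by (simp add: A2_def B2_def power2_eq_square algebra_simps)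
      have "\<beta>*(A2 + B2*\<beta>) = (A2*\<beta>+B2) + B2*(\<beta>^2-1)" by (simp add: power2_eq_square algebra_simps)
      moreover have "B2*(\<beta>^2-1) \<ge> 0" using \<open>B2 \<ge> 0\<close> bb by (intro mult_nonneg_nonneg) auto
      ultimately have "\<beta>*(A2 + B2*\<beta>) \<ge> 0" using c3 by linarith
      hence "A2 + B2*\<beta> \<ge> 0" using assms(7) by (simp add: zero_le_mult_iff)
      then show ?thesis using c3 by simp
    qed
  qed
  thus "(\<beta>*b*g - a)*\<beta> + ((1-a)*g - \<beta>*(1-b)) \<ge> 0"
    "(\<beta>*b*g - a) + ((1-a)*g - \<beta>*(1-b))*\<beta> \<ge> 0" by (simp_all add: A2_def B2_def)
  define A1 where "A1 = \<beta>*a - b*g"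
  define B1 where "B1 = (1-b) - \<beta>*(1-a)*g"
  have "A1*\<beta> + B1 \<ge> 0 \<and> A1 + B1*\<beta> \<ge> 0"
  proof -
    consider "\<beta> \<in> L4 a b" | "\<beta> \<in> L5 a b" | "\<beta> \<in> L6 a b" using m2 by blast
    then show ?thesis
    proof cases
      case 1
      have q: "a*\<beta>^2 - (g*((1-a)+b))*\<beta> + (1-b) \<ge> 0"
        apply (rule outside_roots[where D="D1 a b"])
        using 1 a0 by (auto simp: L4_def g D1 power_mult_distrib mult_ac)
      have "\<beta> \<le> b*g/a" using 1 by (auto simp: L4_def g)
      hence "A1 \<le> 0" using a0 by (simp add: A1_def pos_le_divide_eq algebra_simps)
      have c1: "A1*\<beta> + B1 \<ge> 0" using q by (simp add: A1_def B1_def power2_eq_square algebra_simps)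
      have "A1 + B1*\<beta> = \<beta>*(A1*\<beta>+B1) + (-A1)*(\<beta>^2-1)" by (simp add: power2_eq_square algebra_simps)
      moreover have "\<beta>*(A1*\<beta>+B1) \<ge> 0" using c1 assms(7) by simp
      moreover have "(-A1)*(\<beta>^2-1) \<ge> 0" using \<open>A1 \<le> 0\<close> bb by (intro mult_nonneg_nonneg) auto
      ultimately show ?thesis using c1 by linarith
    next
      case 2
      have q: "a*\<beta>^2 - (g*((1-a)+b))*\<beta> + (1-b) \<ge> 0"
        apply (rule outside_roots[where D="D1 a b"])
        using 2 a0 by (auto simp: L5_def g D1 power_mult_distrib mult_ac)
      have "\<beta> \<le> b*g/a" using 2 by (auto simp: L5_def g)
      hence "A1 \<le> 0" using a0 by (simp add: A1_def pos_le_divide_eq algebra_simps)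
      have c1: "A1*\<beta> + B1 \<ge> 0" using q by (simp add: A1_def B1_def power2_eq_square algebra_simps)
      have "A1 + B1*\<beta> = \<beta>*(A1*\<beta>+B1) + (-A1)*(\<beta>^2-1)" by (simp add: power2_eq_square algebra_simps)
      moreover have "\<beta>*(A1*\<beta>+B1) \<ge> 0" using c1 assms(7) by simp
      moreover have "(-A1)*(\<beta>^2-1) \<ge> 0" using \<open>A1 \<le> 0\<close> bb by (intro mult_nonneg_nonneg) auto
      ultimately show ?thesis using c1 by linarith
    next
      case 3
      have apos: "1 - a > 0"
      proof (rule ccontr)
        assume "\<not> 1 - a > 0" hence "1 - a = 0" using assms by auto
        thus False using 3 assms(7) by (auto simp: L6_def g)
      qed
      have q: "((1-a)*g)*\<beta>^2 - (a+(1-b))*\<beta> + b*g \<le> 0"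
        apply (rule between_roots[where D="D2 a b"])
        using 3 apos assms(6) by (auto simp: L6_def g D2 power_mult_distrib mult_ac power2_eq_square)
      have "b*g/a \<le> \<beta>" using 3 by (auto simp: L6_def g)
      hence "A1 \<ge> 0" using a0 by (simp add: A1_def pos_divide_le_eq algebra_simps)
      have c2: "A1 + B1*\<beta> \<ge> 0" using q by (simp add: A1_def B1_def power2_eq_square algebra_simps)
      have "A1*\<beta> + B1 \<ge> 0"
      proof (cases "B1 \<ge> 0")
        case True then show ?thesis using \<open>A1 \<ge> 0\<close> assms(7) by simp
      next
        case False
        have "A1*\<beta> + B1 = \<beta>*(A1+B1*\<beta>) + (-B1)*(\<beta>^2-1)" by (simp add: power2_eq_square algebra_simps)
        moreover have "\<beta>*(A1+B1*\<beta>) \<ge> 0" using c2 assms(7) by simp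
        moreover have "(-B1)*(\<beta>^2-1) \<ge> 0" using False bb by (intro mult_nonneg_nonneg) auto
        ultimately show ?thesis by linarith
      qed
      then show ?thesis using c2 by simp
    qed
  qed
  thus "(\<beta>*a - b*g)*\<beta> + ((1-b) - \<beta>*(1-a)*g) \<ge> 0"
    "(\<beta>*a - b*g) + ((1-b) - \<beta>*(1-a)*g)*\<beta> \<ge> 0" by (simp_all add: A1_def B1_def)
qed


lemma PP_cons:
  assumes "PP a b u = (p0, p1)"
  shows "P0 a b (False#u) = KK a b * (b * gam a b * p0 - (1 - b) * p1)"
    "P1 a b (False#u) = KK a b * (a * p0 - (1 - a) * gam a b * p1)"
    "P0 a b (True#u) = KK a b * (- (1 - a) * gam a b * p0 + a * p1)"
    "P1 a b (True#u) = KK a b * (- (1 - b) * p0 + b * gam a b * p1)"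
  using assms by (simp_all add: P0_def P1_def Let_def)

theorem lemma9:
  fixes a b :: real
  assumes "0 \<le> a" "a \<le> 1" "0 \<le> b" "b \<le> 1" "a + b > 1"
    and "(L1 a b \<union> L2 a b \<union> L3 a b) \<inter> (L4 a b \<union> L5 a b \<union> L6 a b) \<inter> L0 a b \<noteq> {}"
  shows "\<exists>\<beta>::real. 1 \<le> \<beta> \<and> \<beta> \<le> min (a / ((1 - a) * gam a b)) (b * gam a b / (1 - b)) \<and>
    (\<forall>n::nat. n \<ge> 1 \<longrightarrow>
       (\<forall>u::bool list. length u = n - 1 \<longrightarrow>
          \<beta> * P1 a b u \<ge> P0 a b u \<and> \<beta> * P0 a b u \<ge> P1 a b u) \<longrightarrow>
       (\<forall>x::bool list. length x = n \<longrightarrow>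
          \<beta> * P1 a b x \<ge> P0 a b x \<and> \<beta> * P0 a b x \<ge> P1 a b x))"
proof -
  obtain \<beta> where mm: "\<beta> \<in> (L1 a b \<union> L2 a b \<union> L3 a b) \<inter> (L4 a b \<union> L5 a b \<union> L6 a b) \<inter> L0 a b"
    using assms(6) by (meson ex_in_conv)
  have m1: "\<beta> \<in> L1 a b \<union> L2 a b \<union> L3 a b" and m2: "\<beta> \<in> L4 a b \<union> L5 a b \<union> L6 a b"
    and m0: "\<beta> \<in> L0 a b" using mm by (simp_all only: Int_iff)
  define g where "g = gam a b"
  define K where "K = KK a b"
  have gpos: "g > 0" by (simp add: g_def gam_def)
  have Kpos: "K > 0" using gpos assms(5) by (simp add: K_def KK_def g_def[symmetric])
  have b1: "1 \<le> \<beta>" and bmin: "\<beta> \<le> min (a / ((1 - a) * gam a b)) (b * gam a b / (1 - b))"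
    using m0 by (auto simp: L0_def)
  have fp: "(\<beta>*a - b*g)*\<beta> + ((1-b) - \<beta>*(1-a)*g) \<ge> 0"
    "(\<beta>*a - b*g) + ((1-b) - \<beta>*(1-a)*g)*\<beta> \<ge> 0"
    "(\<beta>*b*g - a)*\<beta> + ((1-a)*g - \<beta>*(1-b)) \<ge> 0"
    "(\<beta>*b*g - a) + ((1-a)*g - \<beta>*(1-b))*\<beta> \<ge> 0"
    using form_props[OF assms(1-5) gpos b1 _ _ _ m1 m2] unfolding D1_def D2_def g_def by simp_all
  have e1: "\<beta> = 1 \<Longrightarrow> (\<beta>*a - b*g) + ((1-b) - \<beta>*(1-a)*g) \<le> 0"
    using fp(3) by (simp add: algebra_simps)
  have e2: "\<beta> = 1 \<Longrightarrow> (\<beta>*b*g - a) + ((1-a)*g - \<beta>*(1-b)) \<le> 0"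
    using fp(1) by (simp add: algebra_simps)
  have main: "\<forall>n::nat. n \<ge> 1 \<longrightarrow>
       (\<forall>u::bool list. length u = n - 1 \<longrightarrow>
          \<beta> * P1 a b u \<ge> P0 a b u \<and> \<beta> * P0 a b u \<ge> P1 a b u) \<longrightarrow>
       (\<forall>x::bool list. length x = n \<longrightarrow>
          \<beta> * P1 a b x \<ge> P0 a b x \<and> \<beta> * P0 a b x \<ge> P1 a b x)"
  proof (intro allI impI)
    fix n :: nat and x :: "bool list"
    assume n: "1 \<le> n" and hyp: "\<forall>u::bool list. length u = n - 1 \<longrightarrow>
          \<beta> * P1 a b u \<ge> P0 a b u \<and> \<beta> * P0 a b u \<ge> P1 a b u" and lx: "length x = n"
    obtain c u where x: "x = c # u" using lx n by (cases x) auto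
    have "length u = n - 1" using x lx by simp
    hence h: "P0 a b u \<le> \<beta> * P1 a b u" "P1 a b u \<le> \<beta> * P0 a b u" using hyp by auto
    obtain p0 p1 where pp: "PP a b u = (p0, p1)" by fastforce
    have pv: "P0 a b u = p0" "P1 a b u = p1" using pp by (simp_all add: P0_def P1_def)
    have k1: "(\<beta>*a - b*g)*p0 + ((1-b) - \<beta>*(1-a)*g)*p1 \<ge> 0"
      by (rule key[OF b1 fp(1) fp(2) e1]) (use h pv in auto)
    have k2: "(\<beta>*b*g - a)*p0 + ((1-a)*g - \<beta>*(1-b))*p1 \<ge> 0"
      by (rule key[OF b1 fp(3) fp(4) e2]) (use h pv in auto)
    have k3: "(\<beta>*a - b*g)*p1 + ((1-b) - \<beta>*(1-a)*g)*p0 \<ge> 0"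
      by (rule key[OF b1 fp(1) fp(2) e1]) (use h pv in auto)
    have k4: "(\<beta>*b*g - a)*p1 + ((1-a)*g - \<beta>*(1-b))*p0 \<ge> 0"
      by (rule key[OF b1 fp(3) fp(4) e2]) (use h pv in auto)
    note pc = PP_cons[OF pp, folded g_def K_def]
    show "\<beta> * P1 a b x \<ge> P0 a b x \<and> \<beta> * P0 a b x \<ge> P1 a b x"
    proof (cases c)
      case False
      have "\<beta> * P1 a b x - P0 a b x = K * ((\<beta>*a - b*g)*p0 + ((1-b) - \<beta>*(1-a)*g)*p1)"
        using False unfolding x by (simp add: pc algebra_simps)
      moreover have "\<beta> * P0 a b x - P1 a b x = K * ((\<beta>*b*g - a)*p0 + ((1-a)*g - \<beta>*(1-b))*p1)"
        using False unfolding x by (simp add: pc algebra_simps)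
      ultimately show ?thesis using k1 k2 Kpos
        by (smt (verit) mult_nonneg_nonneg)
    next
      case True
      have "\<beta> * P1 a b x - P0 a b x = K * ((\<beta>*b*g - a)*p1 + ((1-a)*g - \<beta>*(1-b))*p0)"
        using True unfolding x by (simp add: pc algebra_simps)
      moreover have "\<beta> * P0 a b x - P1 a b x = K * ((\<beta>*a - b*g)*p1 + ((1-b) - \<beta>*(1-a)*g)*p0)"
        using True unfolding x by (simp add: pc algebra_simps)
      ultimately show ?thesis using k3 k4 Kpos
        by (smt (verit) mult_nonneg_nonneg)
    qed
  qed
show ?thesis using b1 bmin main by blast
qed

end
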